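(* Let $T,s,k\in\mathbb{N}$ and let $w\in\{0,1\}^T$ be a random variable satisfying the $\epsilon$-martingale condition. Then \[ \Pr_w\bigl[\text{there is a decomposition } w=xyz \text{ with } |x|=s-1,\ |y|\ge k, \text{ such that } \mu_x(y)\ge0\bigr]\le O(1)\cdot\exp(-\Omega(k)). \]
   Context: Characteristic strings and forks. A characteristic string is $w=w_1\dots w_n\in\{0,1\}^n$; index $i$ is honest if $w_i=0$ and adversarial if $w_i=1$. A fork for $w$ is a rooted tree with edges directed away from the root $r$ and labeling $\ell:V\to\{0,\dots,n\}$ with (F1) $\ell(r)=0$; (F2) labels strictly increasing along directed paths; (F3) each honest index labels exactly one vertex; (F4) for honest $i<j$ the vertex labeled $i$ has strictly smaller depth than the vertex labeled $j$. Write $F\vdash w$. A vertex is honest if it is the root or labeled by an honest index. A tine is a directed path from the root; its length is its number of edges, $\ell(t)$ the label of its last vertex. A fork is closed if every leaf is honest; a closed fork has a unique longest tine $\hat t$. For closed $F\vdash w$ and tine $t$: $\mathrm{gap}(t)=\mathrm{length}(\hat t)-\mathrm{length}(t)$, $\mathrm{reserve}(t)=|\{i:w_i=1,\ i>\ell(t)\}|$, $\mathrm{reach}(t)=\mathrm{reserve}(t)-\mathrm{gap}(t)$. For $w=xy$, tines are disjoint over $y$ if they share no edge terminating at a vertex with label $>|x|$ (a tine may be paired with itself). $\mu_x(F)=\max\min\{\mathrm{reach}(t_1),\mathrm{reach}(t_2)\}$ over pairs disjoint over $y$, and $\mu_x(y)=\max\{\mu_x(F):F\vdash xy\text{ closed}\}$.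 A random variable $W\in\{0,1\}^n$ satisfies the $\epsilon$-martingale condition ($\epsilon\in(0,1)$) if for every $t$, $\Pr[W_t=1\mid W_1,\dots,W_{t-1}]\le(1-\epsilon)/2$. The asymptotic constants may depend on $\epsilon$. *)

theory Defs
  imports "HOL-Probability.Probability"
begin

text \<open>A characteristic string w = w_1 ... w_n is a bool list; w_i = 1 (adversarial)
  is encoded as True, w_i = 0 (honest) as False. Indices are 1-based: w_i = w ! (i - 1).\<close>

definition honest_idx :: "bool list \<Rightarrow> nat \<Rightarrow> bool" where
  "honest_idx w i \<longleftrightarrow> 1 \<le> i \<and> i \<le> length w \<and> \<not> w ! (i - 1)"

definition adv_idx :: "bool list \<Rightarrow> nat \<Rightarrow> bool" where
  "adv_idx w i \<longleftrightarrow> 1 \<le> i \<and> i \<le> length w \<and> w ! (i - 1)"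

text \<open>A rooted tree on a finite vertex set of naturals, given by a root and a parent map;
  the edges are (par v, v) for v \<noteq> root, directed away from the root.\<close>

record fork =
  verts :: "nat set"
  rt    :: nat
  par   :: "nat \<Rightarrow> nat"
  lab   :: "nat \<Rightarrow> nat"

definition is_rooted_tree :: "fork \<Rightarrow> bool" where
  "is_rooted_tree F \<longleftrightarrow> finite (verts F) \<and> rt F \<in> verts F \<and>
     (\<forall>v\<in>verts F. v \<noteq> rt F \<longrightarrow> par F v \<in> verts F) \<and>
     (\<forall>v\<in>verts F. \<exists>m. (par F ^^ m) v = rt F)"

definition depth :: "fork \<Rightarrow> nat \<Rightarrow> nat" where
  "depth F v = (LEAST m. (par F ^^ m) v = rt F)"

definition tine_verts :: "fork \<Rightarrow> nat \<Rightarrow> nat set" where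
  "tine_verts F v = {(par F ^^ i) v | i. i \<le> depth F v}"

definition is_fork :: "bool list \<Rightarrow> fork \<Rightarrow> bool" where
  "is_fork w F \<longleftrightarrow> is_rooted_tree F \<and>
     (\<forall>v\<in>verts F. lab F v \<le> length w) \<and>
     \<comment> \<open>(F1)\<close>
     lab F (rt F) = 0 \<and>
     \<comment> \<open>(F2) labels strictly increase along directed paths\<close>
     (\<forall>v\<in>verts F. \<forall>i. 0 < i \<and> i \<le> depth F v \<longrightarrow> lab F ((par F ^^ i) v) < lab F v) \<and>
     \<comment> \<open>(F3)\<close>
     (\<forall>i. honest_idx w i \<longrightarrow> card {v \<in> verts F. lab F v = i} = 1) \<and>
     \<comment> \<open>(F4)\<close>
     (\<forall>i j u v. honest_idx w i \<and> honest_idx w j \<and> i < j \<and> u \<in> verts F \<and> v \<in> verts F \<and>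
        lab F u = i \<and> lab F v = j \<longrightarrow> depth F u < depth F v)"

definition honest_vertex :: "bool list \<Rightarrow> fork \<Rightarrow> nat \<Rightarrow> bool" where
  "honest_vertex w F v \<longleftrightarrow> v = rt F \<or> honest_idx w (lab F v)"

definition is_leaf :: "fork \<Rightarrow> nat \<Rightarrow> bool" where
  "is_leaf F v \<longleftrightarrow> v \<in> verts F \<and> \<not> (\<exists>u\<in>verts F. u \<noteq> rt F \<and> par F u = v)"

definition closed_fork :: "bool list \<Rightarrow> fork \<Rightarrow> bool" where
  "closed_fork w F \<longleftrightarrow> (\<forall>v. is_leaf F v \<longrightarrow> honest_vertex w F v)"

text \<open>Tines are identified with their terminal vertex; length(t) = depth, \<ell>(t) = label.
  height F = length of the longest tine.\<close>
definition height :: "fork \<Rightarrow> nat" where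
  "height F = Max (depth F ` verts F)"

definition gap :: "fork \<Rightarrow> nat \<Rightarrow> int" where
  "gap F v = int (height F) - int (depth F v)"

definition reserve :: "bool list \<Rightarrow> fork \<Rightarrow> nat \<Rightarrow> int" where
  "reserve w F v = int (card {i. adv_idx w i \<and> i > lab F v})"

definition reach :: "bool list \<Rightarrow> fork \<Rightarrow> nat \<Rightarrow> int" where
  "reach w F v = reserve w F v - gap F v"

text \<open>Tines ending at v1, v2 are disjoint over y (w = xy, m = |x|): they share no edge
  terminating at a vertex with label > m. The edge terminating at u is (par u, u), u \<noteq> root.\<close>
definition disjoint_over :: "fork \<Rightarrow> nat \<Rightarrow> nat \<Rightarrow> nat \<Rightarrow> bool" where
  "disjoint_over F m v1 v2 \<longleftrightarrow>
     (\<forall>u \<in> tine_verts F v1 \<inter> tine_verts F v2. u \<noteq> rt F \<longrightarrow> lab F u \<le> m)"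

definition mu_fork :: "bool list \<Rightarrow> bool list \<Rightarrow> fork \<Rightarrow> int" where
  "mu_fork x y F = Max {min (reach (x @ y) F v1) (reach (x @ y) F v2) | v1 v2.
      v1 \<in> verts F \<and> v2 \<in> verts F \<and> disjoint_over F (length x) v1 v2}"

definition mu :: "bool list \<Rightarrow> bool list \<Rightarrow> int" where
  "mu x y = Sup {mu_fork x y F | F. is_fork (x @ y) F \<and> closed_fork (x @ y) F}"

text \<open>For each position t (0-based; W_{t+1} in the paper)
  and each prefix p of length t:  Pr[W_{t+1} = 1 \<and> prefix = p] \<le> (1-\<epsilon>)/2 \<cdot> Pr[prefix = p],
  i.e. Pr[W_{t+1} = 1 | W_1..W_t] \<le> (1-\<epsilon>)/2 almost surely.\<close>
definition eps_martingale :: "real \<Rightarrow> nat \<Rightarrow> bool list pmf \<Rightarrow> bool" where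
  "eps_martingale eps T W \<longleftrightarrow> set_pmf W \<subseteq> {w. length w = T} \<and>
     (\<forall>t<T. \<forall>p. measure_pmf.prob W {w. take t w = p \<and> w ! t}
                 \<le> (1 - eps) / 2 * measure_pmf.prob W {w. take t w = p})"

end

theory Submission
  imports Defs
begin


lemma depth_spec: "\<exists>m. (par G ^^ m) v = rt G \<Longrightarrow> (par G ^^ depth G v) v = rt G"
  unfolding depth_def by (rule LeastI_ex)

lemma depth_le: "(par G ^^ m) v = rt G \<Longrightarrow> depth G v \<le> m"
  unfolding depth_def by (rule Least_le)

lemma depth_rt[simp]: "depth G (rt G) = 0"
  using depth_le[where G=G and m=0 and v="rt G"] by simp

lemma depth_par:
  assumes ex: "\<exists>m. (par G ^^ m) v = rt G" and nr: "v \<noteq> rt G"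
  shows "depth G v = Suc (depth G (par G v))"
proof -
  have d: "(par G ^^ depth G v) v = rt G" using depth_spec[OF ex] .
  have "depth G v \<noteq> 0" using d nr by (cases "depth G v") auto
  then obtain d' where dd: "depth G v = Suc d'" by (cases "depth G v") auto
  have "(par G ^^ d') (par G v) = rt G" using d dd by (simp add: funpow_Suc_right del: funpow.simps)
  then have 1: "depth G (par G v) \<le> d'" by (rule depth_le)
  have "(par G ^^ depth G (par G v)) (par G v) = rt G"
    using depth_spec[of G "par G v"] \<open>(par G ^^ d') (par G v) = rt G\<close> by blast
  then have "(par G ^^ Suc (depth G (par G v))) v = rt G"
    by (simp add: funpow_Suc_right del: funpow.simps)
  then have "depth G v \<le> Suc (depth G (par G v))" by (rule depth_le)
  then show ?thesis using 1 dd by simp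
qed

lemma tree_ex: "is_rooted_tree G \<Longrightarrow> v \<in> verts G \<Longrightarrow> \<exists>m. (par G ^^ m) v = rt G"
  unfolding is_rooted_tree_def by blast

lemma tree_par: "is_rooted_tree G \<Longrightarrow> v \<in> verts G \<Longrightarrow> v \<noteq> rt G \<Longrightarrow> par G v \<in> verts G"
  unfolding is_rooted_tree_def by blast

lemma tine_par_sub:
  assumes ex: "\<exists>m. (par G ^^ m) v = rt G" and nr: "v \<noteq> rt G"
  shows "tine_verts G (par G v) \<subseteq> tine_verts G v"
proof
  fix u assume "u \<in> tine_verts G (par G v)"
  then obtain i where u: "u = (par G ^^ i) (par G v)" "i \<le> depth G (par G v)"
    unfolding tine_verts_def by blast
  have "u = (par G ^^ Suc i) v" using u(1) by (simp add: funpow_Suc_right del: funpow.simps)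
  moreover have "Suc i \<le> depth G v" using u(2) depth_par[OF ex nr] by simp
  ultimately show "u \<in> tine_verts G v" unfolding tine_verts_def by blast
qed

lemma tine_self: "v \<in> tine_verts G v"
  unfolding tine_verts_def by (rule CollectI, rule exI[of _ 0]) simp

lemma tine_rt: "tine_verts G (rt G) = {rt G}"
  unfolding tine_verts_def by simp

lemma fork_tree: "is_fork w G \<Longrightarrow> is_rooted_tree G"
  unfolding is_fork_def by blast

lemma fork_lab_rt: "is_fork w G \<Longrightarrow> lab G (rt G) = 0"
  unfolding is_fork_def by blast

lemma fork_lab_le: "is_fork w G \<Longrightarrow> v \<in> verts G \<Longrightarrow> lab G v \<le> length w"
  unfolding is_fork_def by blast

lemma fork_lab_par:
  assumes F: "is_fork w G" and v: "v \<in> verts G" and nr: "v \<noteq> rt G"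
  shows "lab G (par G v) < lab G v"
proof -
  have "depth G v = Suc (depth G (par G v))"
    using depth_par[OF tree_ex[OF fork_tree[OF F] v] nr] .
  then have "0 < (1::nat) \<and> 1 \<le> depth G v" by simp
  then have "lab G ((par G ^^ 1) v) < lab G v" using F v unfolding is_fork_def by blast
  then show ?thesis by simp
qed

lemma fork_lab_pos:
  assumes F: "is_fork w G" and v: "v \<in> verts G" and nr: "v \<noteq> rt G"
  shows "1 \<le> lab G v"
  using fork_lab_par[OF F v nr] by simp

lemma fork_F3: "is_fork w G \<Longrightarrow> honest_idx w i \<Longrightarrow> card {v \<in> verts G. lab G v = i} = 1"
  unfolding is_fork_def by blast

lemma fork_F4: "is_fork w G \<Longrightarrow> honest_idx w i \<Longrightarrow> honest_idx w j \<Longrightarrow> i < j \<Longrightarrow>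
   u \<in> verts G \<Longrightarrow> v \<in> verts G \<Longrightarrow> lab G u = i \<Longrightarrow> lab G v = j \<Longrightarrow> depth G u < depth G v"
  unfolding is_fork_def by blast

lemma honest_idx_le: "honest_idx w i \<Longrightarrow> i \<le> length w"
  unfolding honest_idx_def by simp

lemma honest_idx_app: "i \<le> length w \<Longrightarrow> honest_idx (w @ [b]) i = honest_idx w i"
  unfolding honest_idx_def by (auto simp: nth_append)

lemma honest_idx_True: "honest_idx (w @ [True]) i = honest_idx w i"
  unfolding honest_idx_def by (auto simp: nth_append)

lemma honest_idx_False: "honest_idx (w @ [False]) i = (honest_idx w i \<or> i = Suc (length w))"
  unfolding honest_idx_def by (auto simp: nth_append)

lemma adv_idx_True: "adv_idx (w @ [True]) i = (adv_idx w i \<or> i = Suc (length w))"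
  unfolding adv_idx_def by (auto simp: nth_append)

lemma adv_idx_False: "adv_idx (w @ [False]) i = adv_idx w i"
  unfolding adv_idx_def by (auto simp: nth_append)

definition restr :: "fork \<Rightarrow> nat \<Rightarrow> fork" where
  "restr G n = G\<lparr>verts := {v \<in> verts G. lab G v \<le> n}\<rparr>"

lemma restr_simps[simp]: "par (restr G n) = par G" "rt (restr G n) = rt G" "lab (restr G n) = lab G"
  "verts (restr G n) = {v \<in> verts G. lab G v \<le> n}"
  unfolding restr_def by simp_all

lemma restr_depth[simp]: "depth (restr G n) = depth G"
  unfolding depth_def by simp

lemma restr_tine[simp]: "tine_verts (restr G n) = tine_verts G"
  unfolding tine_verts_def by (simp add: fun_eq_iff)

lemma restr_disj[simp]: "disjoint_over (restr G n) = disjoint_over G"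
  unfolding disjoint_over_def by (simp add: fun_eq_iff)

lemma restr_fork:
  assumes F: "is_fork (w @ [b]) G"
  shows "is_fork w (restr G (length w))"
proof -
  let ?n = "length w"
  have T: "is_rooted_tree G" using F by (rule fork_tree)
  have lr: "lab G (rt G) = 0" using F by (rule fork_lab_rt)
  have tree: "is_rooted_tree (restr G ?n)"
    unfolding is_rooted_tree_def
  proof (intro conjI ballI impI)
    show "finite (verts (restr G ?n))" using T unfolding is_rooted_tree_def by simp
    show "rt (restr G ?n) \<in> verts (restr G ?n)" using T lr unfolding is_rooted_tree_def by simp
  next
    fix v assume v: "v \<in> verts (restr G ?n)" "v \<noteq> rt (restr G ?n)"
    then have "par G v \<in> verts G" "lab G (par G v) < lab G v"
      using tree_par[OF T] fork_lab_par[OF F] by auto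
    then show "par (restr G ?n) v \<in> verts (restr G ?n)" using v by simp
  next
    fix v assume v: "v \<in> verts (restr G ?n)"
    then show "\<exists>m. (par (restr G ?n) ^^ m) v = rt (restr G ?n)" using tree_ex[OF T] by simp
  qed
  show ?thesis
    unfolding is_fork_def
  proof (intro conjI allI impI ballI)
    show "is_rooted_tree (restr G ?n)" by (rule tree)
    show "\<And>v. v \<in> verts (restr G ?n) \<Longrightarrow> lab (restr G ?n) v \<le> length w" by simp
    show "lab (restr G ?n) (rt (restr G ?n)) = 0" using lr by simp
  next
    fix v i assume "v \<in> verts (restr G ?n)" "0 < i \<and> i \<le> depth (restr G ?n) v"
    then show "lab (restr G ?n) ((par (restr G ?n) ^^ i) v) < lab (restr G ?n) v"
      using F unfolding is_fork_def by auto
  next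
    fix i assume h: "honest_idx w i"
    then have "honest_idx (w @ [b]) i" using honest_idx_app[OF honest_idx_le[OF h]] by simp
    then have "card {v \<in> verts G. lab G v = i} = 1" by (rule fork_F3[OF F])
    moreover have "{v \<in> verts (restr G ?n). lab (restr G ?n) v = i} = {v \<in> verts G. lab G v = i}"
      using honest_idx_le[OF h] by auto
    ultimately show "card {v \<in> verts (restr G ?n). lab (restr G ?n) v = i} = 1" by simp
  next
    fix i j u v assume a: "honest_idx w i \<and> honest_idx w j \<and> i < j \<and> u \<in> verts (restr G ?n) \<and>
        v \<in> verts (restr G ?n) \<and> lab (restr G ?n) u = i \<and> lab (restr G ?n) v = j"
    then have "honest_idx (w @ [b]) i" "honest_idx (w @ [b]) j"
      using honest_idx_app honest_idx_le by auto
    then show "depth (restr G ?n) u < depth (restr G ?n) v"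
      using fork_F4[OF F] a by auto
  qed
qed



definition hgt :: "bool list \<Rightarrow> fork \<Rightarrow> nat" where
  "hgt w G = Max (depth G ` {v \<in> verts G. honest_vertex w G v})"

definition reachh :: "bool list \<Rightarrow> fork \<Rightarrow> nat \<Rightarrow> int" where
  "reachh w G v = reserve w G v - (int (hgt w G) - int (depth G v))"

lemma hon_fin: "is_fork w G \<Longrightarrow> finite {v \<in> verts G. honest_vertex w G v}"
  using fork_tree unfolding is_rooted_tree_def by auto

lemma hon_rt: "is_fork w G \<Longrightarrow> rt G \<in> {v \<in> verts G. honest_vertex w G v}"
  using fork_tree unfolding is_rooted_tree_def honest_vertex_def by auto

lemma hgt_ge: "is_fork w G \<Longrightarrow> v \<in> verts G \<Longrightarrow> honest_vertex w G v \<Longrightarrow> depth G v \<le> hgt w G"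
  unfolding hgt_def using hon_fin by (intro Max_ge) auto

lemma hgt_in: "is_fork w G \<Longrightarrow> \<exists>v \<in> verts G. honest_vertex w G v \<and> hgt w G = depth G v"
proof -
  assume F: "is_fork w G"
  have "hgt w G \<in> depth G ` {v \<in> verts G. honest_vertex w G v}"
    unfolding hgt_def using hon_fin[OF F] hon_rt[OF F] by (intro Max_in) auto
  then show ?thesis by auto
qed

lemma reserve_nonneg: "0 \<le> reserve w G v"
  unfolding reserve_def by simp

lemma reserve_restr[simp]: "reserve w (restr G n) v = reserve w G v"
  unfolding reserve_def by simp

lemma reserve_False: "reserve (w @ [False]) G v = reserve w G v"
  unfolding reserve_def by (simp add: adv_idx_False)

lemma adv_fin: "finite {i. adv_idx w i \<and> P i}"
  by (rule finite_subset[of _ "{..length w}"]) (auto simp: adv_idx_def)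

lemma reserve_True_le: "lab G v \<le> length w \<Longrightarrow> reserve (w @ [True]) G v = reserve w G v + 1"
proof -
  assume l: "lab G v \<le> length w"
  have "{i. adv_idx (w @ [True]) i \<and> lab G v < i} = insert (Suc (length w)) {i. adv_idx w i \<and> lab G v < i}"
    using l by (auto simp: adv_idx_True)
  moreover have "Suc (length w) \<notin> {i. adv_idx w i \<and> lab G v < i}" by (auto simp: adv_idx_def)
  ultimately show ?thesis unfolding reserve_def using adv_fin by simp
qed

lemma reserve_top: "lab G v = length w \<Longrightarrow> reserve w G v = 0"
  unfolding reserve_def adv_idx_def by auto

lemma hgt_True: assumes F: "is_fork (w @ [True]) G"
  shows "hgt (w @ [True]) G = hgt w (restr G (length w))"
proof -
  have "{v \<in> verts G. honest_vertex (w @ [True]) G v} =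
        {v \<in> verts (restr G (length w)). honest_vertex w (restr G (length w)) v}"
    using fork_lab_rt[OF F] honest_idx_le
    by (auto simp: honest_vertex_def honest_idx_True)
  then show ?thesis unfolding hgt_def by simp
qed

lemma vertex_top:
  assumes F: "is_fork (w @ [False]) G" and v: "v \<in> verts G" and lv: "lab G v = Suc (length w)"
  shows "hgt (w @ [False]) G = depth G v" and "hgt w (restr G (length w)) < depth G v"
proof -
  have hv: "honest_idx (w @ [False]) (lab G v)" using lv by (simp add: honest_idx_False)
  have vr: "v \<noteq> rt G" using fork_lab_rt[OF F] lv by auto
  have dv: "depth G v \<ge> 1"
    using depth_par[OF tree_ex[OF fork_tree[OF F] v] vr] by simp
  have lt: "depth G u < depth G v" if u: "u \<in> verts G" "honest_vertex (w @ [False]) G u" "lab G u \<le> length w" for u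
  proof (cases "u = rt G")
    case True then show ?thesis using dv by simp
  next
    case False
    then have "honest_idx (w @ [False]) (lab G u)" using u unfolding honest_vertex_def by simp
    then show ?thesis using fork_F4[OF F _ hv _ u(1) v] u(3) lv by simp
  qed
  have "hgt (w @ [False]) G \<le> depth G v"
  proof -
    obtain u where u: "u \<in> verts G" "honest_vertex (w @ [False]) G u" "hgt (w @ [False]) G = depth G u"
      using hgt_in[OF F] by blast
    show ?thesis
    proof (cases "lab G u \<le> length w")
      case True then show ?thesis using lt[OF u(1,2)] u(3) by simp
    next
      case False
      then have "lab G u = Suc (length w)" using fork_lab_le[OF F u(1)] by simp
      have "card {x \<in> verts G. lab G x = Suc (length w)} = 1"
        using fork_F3[OF F] hv lv by simp
      then obtain z where "{x \<in> verts G. lab G x = Suc (length w)} = {z}" by (rule card_1_singletonE)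
      then have "u \<in> {z}" "v \<in> {z}" using u(1) v lv \<open>lab G u = Suc (length w)\<close> by blast+
      then have "u = v" by simp
      then show ?thesis using u(3) by simp
    qed
  qed
  moreover have "depth G v \<le> hgt (w @ [False]) G"
    using hgt_ge[OF F v] hv unfolding honest_vertex_def by simp
  ultimately show "hgt (w @ [False]) G = depth G v" by simp
  have F': "is_fork w (restr G (length w))" using restr_fork[OF F] .
  obtain u where u: "u \<in> verts (restr G (length w))" "honest_vertex w (restr G (length w)) u"
     "hgt w (restr G (length w)) = depth (restr G (length w)) u"
    using hgt_in[OF F'] by blast
  have "honest_vertex (w @ [False]) G u"
    using u(2) unfolding honest_vertex_def by (auto simp: honest_idx_False)
  then show "hgt w (restr G (length w)) < depth G v" using lt[of u] u by simp
qed

lemma hgt_False_gt: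
  assumes F: "is_fork (w @ [False]) G"
  shows "hgt w (restr G (length w)) < hgt (w @ [False]) G"
proof -
  have "honest_idx (w @ [False]) (Suc (length w))" by (simp add: honest_idx_False)
  then have "card {x \<in> verts G. lab G x = Suc (length w)} = 1" using fork_F3[OF F] by simp
  then obtain z where z: "{x \<in> verts G. lab G x = Suc (length w)} = {z}" by (rule card_1_singletonE)
  then have "z \<in> verts G" "lab G z = Suc (length w)" by auto
  then show ?thesis using vertex_top[OF F] by simp
qed



definition rstep :: "int \<Rightarrow> bool \<Rightarrow> int" where
  "rstep r b = (if b then r + 1 else max 0 (r - 1))"

definition rho :: "bool list \<Rightarrow> int" where
  "rho w = foldl rstep 0 w"

definition mstep :: "int \<times> int \<Rightarrow> bool \<Rightarrow> int \<times> int" where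
  "mstep s b = (rstep (fst s) b, if b then snd s + 1 else (if snd s = 0 \<and> fst s \<ge> 1 then 0 else snd s - 1))"

definition mst :: "bool list \<Rightarrow> bool list \<Rightarrow> int \<times> int" where
  "mst x y = foldl mstep (rho x, rho x) y"

definition mub :: "bool list \<Rightarrow> bool list \<Rightarrow> int" where
  "mub x y = snd (mst x y)"

lemma rho_Nil[simp]: "rho [] = 0" by (simp add: rho_def)
lemma rho_snoc[simp]: "rho (w @ [b]) = rstep (rho w) b" by (simp add: rho_def)
lemma mst_fst: "fst (mst x y) = rho (x @ y)"
  by (induction y rule: rev_induct) (auto simp: mst_def mstep_def simp flip: append_assoc)
lemma mub_Nil[simp]: "mub x [] = rho x" by (simp add: mub_def mst_def)
lemma mub_snoc: "mub x (y @ [b]) = (if b then mub x y + 1 else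
     (if mub x y = 0 \<and> rho (x @ y) \<ge> 1 then 0 else mub x y - 1))"
  using mst_fst[of x y] by (simp add: mub_def mst_def mstep_def)

lemma reach_R:
  "is_fork w G \<Longrightarrow> v \<in> verts G \<Longrightarrow> reachh w G v \<le> rho w"
proof (induction w arbitrary: G v rule: rev_induct)
  case Nil
  have "v = rt G" using fork_lab_le[OF Nil.prems] fork_lab_pos[OF Nil.prems] by force
  moreover have "reserve [] G v = 0" unfolding reserve_def adv_idx_def by simp
  ultimately show ?case unfolding reachh_def by simp
next
  case (snoc b w)
  let ?G' = "restr G (length w)"
  have F': "is_fork w ?G'" using restr_fork[OF snoc.prems(1)] .
  have T: "is_rooted_tree G" using fork_tree[OF snoc.prems(1)] .
  show ?case
  proof (cases b)
    case True
    have F: "is_fork (w @ [True]) G" using snoc.prems(1) True by simp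
    have hg: "hgt (w @ [b]) G = hgt w ?G'" using hgt_True[OF F] True by simp
    show ?thesis
    proof (cases "lab G v \<le> length w")
      case le: True
      then have "v \<in> verts ?G'" using snoc.prems by simp
      then have "reachh w ?G' v \<le> rho w" using snoc.IH[OF F'] by blast
      then show ?thesis using le hg True reserve_True_le[OF le]
        unfolding reachh_def by (simp add: rstep_def)
    next
      case False
      then have lv: "lab G v = length (w @ [b])" using fork_lab_le[OF snoc.prems] by simp
      have vr: "v \<noteq> rt G" using lv fork_lab_rt[OF snoc.prems(1)] by auto
      have pv: "par G v \<in> verts ?G'"
        using tree_par[OF T snoc.prems(2) vr] fork_lab_par[OF snoc.prems(1,2) vr] lv by simp
      have "reachh w ?G' (par G v) \<le> rho w" using snoc.IH[OF F' pv] .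
      moreover have "depth G v = Suc (depth G (par G v))"
        using depth_par[OF tree_ex[OF T snoc.prems(2)] vr] .
      moreover have "reserve (w @ [b]) G v = 0" using reserve_top[OF lv] .
      ultimately show ?thesis using hg True reserve_nonneg[of w G "par G v"]
        unfolding reachh_def by (simp add: rstep_def)
    qed
  next
    case False
    have F: "is_fork (w @ [False]) G" using snoc.prems(1) False by simp
    have hg: "hgt w ?G' < hgt (w @ [b]) G" using hgt_False_gt[OF F] False by simp
    show ?thesis
    proof (cases "lab G v \<le> length w")
      case le: True
      then have "v \<in> verts ?G'" using snoc.prems by simp
      then have "reachh w ?G' v \<le> rho w" using snoc.IH[OF F'] by blast
      then show ?thesis using hg False reserve_False[of w G v]
        unfolding reachh_def by (simp add: rstep_def)
    next
      case gt: False
      then have lv: "lab G v = Suc (length w)" using fork_lab_le[OF snoc.prems] by simp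
      have "hgt (w @ [False]) G = depth G v" using vertex_top(1)[OF F snoc.prems(2) lv] .
      moreover have "reserve (w @ [False]) G v = 0" using reserve_top[of G v "w @ [False]"] lv by simp
      ultimately show ?thesis using False unfolding reachh_def by (simp add: rstep_def)
    qed
  qed
qed

lemma disj_mono: "disjoint_over G m v1 v2 \<Longrightarrow> tine_verts G u1 \<subseteq> tine_verts G v1 \<Longrightarrow>
   tine_verts G u2 \<subseteq> tine_verts G v2 \<Longrightarrow> disjoint_over G m u1 u2"
  unfolding disjoint_over_def by (meson IntD1 IntD2 IntI subsetD)

lemma True_vertex:
  assumes F: "is_fork (w @ [True]) G" and v: "v \<in> verts G"
  shows "\<exists>v'. v' \<in> verts (restr G (length w)) \<and> tine_verts G v' \<subseteq> tine_verts G v \<and>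
     reachh (w @ [True]) G v \<le> reachh w (restr G (length w)) v' + 1"
proof -
  let ?G' = "restr G (length w)"
  have T: "is_rooted_tree G" using fork_tree[OF F] .
  have hg: "hgt (w @ [True]) G = hgt w ?G'" using hgt_True[OF F] by simp
  show ?thesis
  proof (cases "lab G v \<le> length w")
    case le: True
    then have "v \<in> verts ?G'" using v by simp
    moreover have "reachh (w @ [True]) G v = reachh w ?G' v + 1"
      using le hg reserve_True_le[OF le] unfolding reachh_def by simp
    ultimately show ?thesis by (intro exI[of _ v] conjI) auto
  next
    case False
    then have lv: "lab G v = length (w @ [True])" using fork_lab_le[OF F v] by simp
    have vr: "v \<noteq> rt G" using lv fork_lab_rt[OF F] by auto
    have pv: "par G v \<in> verts ?G'"
      using tree_par[OF T v vr] fork_lab_par[OF F v vr] lv by simp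
    have "depth G v = Suc (depth G (par G v))"
      using depth_par[OF tree_ex[OF T v] vr] .
    moreover have "reserve (w @ [True]) G v = 0" using reserve_top[OF lv] .
    ultimately have "reachh (w @ [True]) G v \<le> reachh w ?G' (par G v) + 1"
      using hg reserve_nonneg[of w G "par G v"] unfolding reachh_def by simp
    moreover have "tine_verts G (par G v) \<subseteq> tine_verts G v"
      using tine_par_sub[OF tree_ex[OF T v] vr] .
    ultimately show ?thesis using pv by (intro exI[of _ "par G v"] conjI) auto
  qed
qed

lemma False_vertex_le:
  assumes F: "is_fork (w @ [False]) G" and v: "v \<in> verts G" and le: "lab G v \<le> length w"
  shows "v \<in> verts (restr G (length w))"
    "reachh (w @ [False]) G v \<le> reachh w (restr G (length w)) v - 1"
  using v le hgt_False_gt[OF F] reserve_False[of w G v] unfolding reachh_def by auto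

lemma False_vertex_top:
  assumes F: "is_fork (w @ [False]) G" and v: "v \<in> verts G" and gt: "\<not> lab G v \<le> length w"
  shows "lab G v = Suc (length w)" "reachh (w @ [False]) G v = 0"
    "par G v \<in> verts (restr G (length w))" "tine_verts G (par G v) \<subseteq> tine_verts G v"
    "reachh w (restr G (length w)) (par G v) \<ge> 0"
proof -
  let ?G' = "restr G (length w)"
  have T: "is_rooted_tree G" using fork_tree[OF F] .
  show lv: "lab G v = Suc (length w)" using gt fork_lab_le[OF F v] by simp
  have vr: "v \<noteq> rt G" using lv fork_lab_rt[OF F] by auto
  have "hgt (w @ [False]) G = depth G v" using vertex_top(1)[OF F v lv] .
  moreover have "reserve (w @ [False]) G v = 0" using reserve_top[of G v "w @ [False]"] lv by simp
  ultimately show "reachh (w @ [False]) G v = 0" unfolding reachh_def by simp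
  show "par G v \<in> verts ?G'"
    using tree_par[OF T v vr] fork_lab_par[OF F v vr] lv by simp
  show "tine_verts G (par G v) \<subseteq> tine_verts G v"
    using tine_par_sub[OF tree_ex[OF T v] vr] .
  have "depth G v = Suc (depth G (par G v))"
    using depth_par[OF tree_ex[OF T v] vr] .
  then show "reachh w ?G' (par G v) \<ge> 0"
    using vertex_top(2)[OF F v lv] reserve_nonneg[of w G "par G v"] unfolding reachh_def by simp
qed

lemma top_unique:
  assumes F: "is_fork (w @ [False]) G" and "v \<in> verts G" "u \<in> verts G"
    "lab G v = Suc (length w)" "lab G u = Suc (length w)"
  shows "u = v"
proof -
  have "honest_idx (w @ [False]) (Suc (length w))" by (simp add: honest_idx_False)
  then have "card {x \<in> verts G. lab G x = Suc (length w)} = 1" using fork_F3[OF F] by simp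
  then obtain z where z: "{x \<in> verts G. lab G x = Suc (length w)} = {z}" by (rule card_1_singletonE)
  then have "u \<in> {z}" "v \<in> {z}" using assms by blast+
  then show ?thesis by simp
qed

lemma reach_M:
  "is_fork (x @ y) G \<Longrightarrow> v1 \<in> verts G \<Longrightarrow> v2 \<in> verts G \<Longrightarrow> disjoint_over G (length x) v1 v2 \<Longrightarrow>
   min (reachh (x @ y) G v1) (reachh (x @ y) G v2) \<le> mub x y"
proof (induction y arbitrary: G v1 v2 rule: rev_induct)
  case Nil
  then show ?case using reach_R[of x G v1] by simp
next
  case (snoc b y)
  let ?w = "x @ y"
  let ?G' = "restr G (length ?w)"
  have FF: "is_fork (?w @ [b]) G" using snoc.prems(1) by simp
  have F': "is_fork ?w ?G'" using restr_fork[OF FF] .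
  have mx: "length x \<le> length ?w" by simp
  show ?case
  proof (cases b)
    case True
    have F: "is_fork (?w @ [True]) G" using FF True by simp
    obtain u1 where u1: "u1 \<in> verts ?G'" "tine_verts G u1 \<subseteq> tine_verts G v1"
       "reachh (?w @ [True]) G v1 \<le> reachh ?w ?G' u1 + 1" using True_vertex[OF F snoc.prems(2)] by blast
    obtain u2 where u2: "u2 \<in> verts ?G'" "tine_verts G u2 \<subseteq> tine_verts G v2"
       "reachh (?w @ [True]) G v2 \<le> reachh ?w ?G' u2 + 1" using True_vertex[OF F snoc.prems(3)] by blast
    have "disjoint_over ?G' (length x) u1 u2" using disj_mono[OF snoc.prems(4) u1(2) u2(2)] by simp
    then have "min (reachh ?w ?G' u1) (reachh ?w ?G' u2) \<le> mub x y" using snoc.IH[OF F' u1(1) u2(1)] by blast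
    then show ?thesis using u1(3) u2(3) True by (simp add: mub_snoc)
  next
    case False
    have F: "is_fork (?w @ [False]) G" using FF False by simp
    have Fm: "min a c \<le> (if M = 0 \<and> R \<ge> 1 then 0 else M - 1)"
      if "a \<le> 0" "c \<le> t - 1" "min r t \<le> M" "r \<ge> 0" "t \<le> R" for a c r t M R :: int
    proof (cases "t \<ge> 1")
      case True
      then have "M \<ge> 0" using that by linarith
      then show ?thesis using that True by (cases "M = 0") auto
    next
      case False
      then have "t \<le> M" using that by linarith
      then show ?thesis using that by auto
    qed
    show ?thesis
    proof (cases "lab G v1 \<le> length ?w"; cases "lab G v2 \<le> length ?w")
      assume l1: "lab G v1 \<le> length ?w" and l2: "lab G v2 \<le> length ?w"
      note a1 = False_vertex_le[OF F snoc.prems(2) l1] and a2 = False_vertex_le[OF F snoc.prems(3) l2]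
      have "min (reachh ?w ?G' v1) (reachh ?w ?G' v2) \<le> mub x y"
        using snoc.IH[OF F' a1(1) a2(1)] snoc.prems(4) by simp
      then show ?thesis using a1(2) a2(2) False by (auto simp: mub_snoc)
    next
      assume l1: "lab G v1 \<le> length ?w" and l2: "\<not> lab G v2 \<le> length ?w"
      note a1 = False_vertex_le[OF F snoc.prems(2) l1] and a2 = False_vertex_top[OF F snoc.prems(3) l2]
      have "disjoint_over ?G' (length x) v1 (par G v2)"
        using disj_mono[OF snoc.prems(4) _ a2(4)] by simp
      then have "min (reachh ?w ?G' v1) (reachh ?w ?G' (par G v2)) \<le> mub x y"
        using snoc.IH[OF F' a1(1) a2(3)] by simp
      moreover have "reachh ?w ?G' v1 \<le> rho ?w" using reach_R[OF F' a1(1)] .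
      ultimately have "min (reachh (?w @ [False]) G v2) (reachh (?w @ [False]) G v1) \<le>
          (if mub x y = 0 \<and> rho ?w \<ge> 1 then 0 else mub x y - 1)"
        using Fm[of _ _ "reachh ?w ?G' v1" "reachh ?w ?G' (par G v2)"] a1(2) a2(2) a2(5)
        by (simp add: min.commute)
      then show ?thesis using False by (simp add: mub_snoc min.commute)
    next
      assume l1: "\<not> lab G v1 \<le> length ?w" and l2: "lab G v2 \<le> length ?w"
      note a1 = False_vertex_top[OF F snoc.prems(2) l1] and a2 = False_vertex_le[OF F snoc.prems(3) l2]
      have "disjoint_over ?G' (length x) (par G v1) v2"
        using disj_mono[OF snoc.prems(4) a1(4)] by simp
      then have "min (reachh ?w ?G' (par G v1)) (reachh ?w ?G' v2) \<le> mub x y"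
        using snoc.IH[OF F' a1(3) a2(1)] by simp
      moreover have "reachh ?w ?G' v2 \<le> rho ?w" using reach_R[OF F' a2(1)] .
      ultimately have "min (reachh (?w @ [False]) G v1) (reachh (?w @ [False]) G v2) \<le>
          (if mub x y = 0 \<and> rho ?w \<ge> 1 then 0 else mub x y - 1)"
        using Fm[of _ _ "reachh ?w ?G' v2" "reachh ?w ?G' (par G v1)"] a1(2) a2(2) a1(5)
        by (simp add: min.commute)
      then show ?thesis using False by (simp add: mub_snoc)
    next
      assume l1: "\<not> lab G v1 \<le> length ?w" and l2: "\<not> lab G v2 \<le> length ?w"
      note a1 = False_vertex_top[OF F snoc.prems(2) l1] and a2 = False_vertex_top[OF F snoc.prems(3) l2]
      have "v1 = v2" using top_unique[OF F snoc.prems(3,2) a2(1) a1(1)] .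
      moreover have "v1 \<noteq> rt G" using a1(1) fork_lab_rt[OF F] by auto
      ultimately have "lab G v1 \<le> length x" using snoc.prems(4) tine_self[of v1 G]
        unfolding disjoint_over_def by blast
      then show ?thesis using l1 by simp
    qed
  qed
qed



lemma closed_height:
  assumes F: "is_fork w G" and C: "closed_fork w G"
  shows "height G = hgt w G"
proof -
  have T: "is_rooted_tree G" using fork_tree[OF F] .
  have fin: "finite (verts G)" and rtv: "rt G \<in> verts G" using T unfolding is_rooted_tree_def by auto
  have "hgt w G \<le> height G" unfolding hgt_def height_def
    using fin rtv hon_rt[OF F] by (intro Max_mono) auto
  moreover have "height G \<le> hgt w G"
  proof -
    have "height G \<in> depth G ` verts G" unfolding height_def using fin rtv by (intro Max_in) auto
    then obtain v where v: "v \<in> verts G" "height G = depth G v" by auto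
    have "is_leaf G v"
    proof (rule ccontr)
      assume "\<not> is_leaf G v"
      then obtain u where u: "u \<in> verts G" "u \<noteq> rt G" "par G u = v" using v unfolding is_leaf_def by auto
      have "depth G u = Suc (depth G v)" using depth_par[OF tree_ex[OF T u(1)] u(2)] u(3) by simp
      moreover have "depth G u \<le> height G" unfolding height_def using fin u(1) by (intro Max_ge) auto
      ultimately show False using v by simp
    qed
    then have "honest_vertex w G v" using C unfolding closed_fork_def by blast
    then show ?thesis using hgt_ge[OF F v(1)] v(2) by simp
  qed
  ultimately show ?thesis by simp
qed

lemma closed_reach: "is_fork w G \<Longrightarrow> closed_fork w G \<Longrightarrow> reach w G v = reachh w G v"
  unfolding reach_def reachh_def gap_def using closed_height by simp

lemma mu_fork_le:
  assumes F: "is_fork (x @ y) G" and C: "closed_fork (x @ y) G"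
  shows "mu_fork x y G \<le> mub x y"
proof -
  let ?M = "{min (reach (x @ y) G v1) (reach (x @ y) G v2) | v1 v2.
      v1 \<in> verts G \<and> v2 \<in> verts G \<and> disjoint_over G (length x) v1 v2}"
  have T: "is_rooted_tree G" using fork_tree[OF F] .
  have fin: "finite (verts G)" and rtv: "rt G \<in> verts G" using T unfolding is_rooted_tree_def by auto
  have "?M \<subseteq> (\<lambda>p. min (reach (x @ y) G (fst p)) (reach (x @ y) G (snd p))) ` (verts G \<times> verts G)"
    by force
  then have finM: "finite ?M" by (rule finite_subset) (simp add: fin)
  have "disjoint_over G (length x) (rt G) (rt G)" unfolding disjoint_over_def tine_rt by simp
  then have neM: "?M \<noteq> {}" using rtv by blast
  have "\<forall>a \<in> ?M. a \<le> mub x y"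
  proof
    fix a assume "a \<in> ?M"
    then obtain v1 v2 where "a = min (reach (x @ y) G v1) (reach (x @ y) G v2)"
      "v1 \<in> verts G" "v2 \<in> verts G" "disjoint_over G (length x) v1 v2" by blast
    then show "a \<le> mub x y" using reach_M[OF F] closed_reach[OF F C] by simp
  qed
  then show ?thesis unfolding mu_fork_def using Max_le_iff[OF finM neM] by blast
qed

lemma funpow_minus1: "((\<lambda>v::nat. v - 1) ^^ m) v = v - m"
  by (induction m) auto

lemma funpow_minus1': "((\<lambda>v::nat. v - Suc 0) ^^ m) v = v - m"
  using funpow_minus1 by simp

definition cfork :: "bool list \<Rightarrow> fork" where
  "cfork w = \<lparr>verts = {0..Max (insert 0 {i. honest_idx w i})}, rt = 0, par = (\<lambda>v. v - 1), lab = id\<rparr>"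

lemma cfork_depth: "depth (cfork w) v = v"
  unfolding depth_def cfork_def by (rule Least_equality) (auto simp: funpow_minus1 funpow_minus1')

lemma cfork_ok: "is_fork w (cfork w) \<and> closed_fork w (cfork w)"
proof -
  let ?H = "insert 0 {i. honest_idx w i}"
  let ?L = "Max ?H"
  have finH0: "finite {i. honest_idx w i}" by (rule finite_subset[of _ "{..length w}"]) (auto simp: honest_idx_def)
  then have finH: "finite ?H" by simp
  have Lle: "?L \<le> length w" using finH by (subst Max_le_iff) (auto simp: honest_idx_def finH0)
  have iL: "honest_idx w i \<Longrightarrow> i \<le> ?L" for i using finH by (intro Max_ge) auto
  have LH: "?L \<in> ?H" using finH by (intro Max_in) auto
  have tree: "is_rooted_tree (cfork w)"
    unfolding is_rooted_tree_def cfork_def using funpow_minus1' by auto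
  have F: "is_fork w (cfork w)"
    unfolding is_fork_def
  proof (intro conjI allI impI ballI)
    show "is_rooted_tree (cfork w)" by (rule tree)
    show "\<And>v. v \<in> verts (cfork w) \<Longrightarrow> lab (cfork w) v \<le> length w" using Lle by (auto simp: cfork_def)
    show "lab (cfork w) (rt (cfork w)) = 0" by (simp add: cfork_def)
  next
    fix v i assume "v \<in> verts (cfork w)" "0 < i \<and> i \<le> depth (cfork w) v"
    then show "lab (cfork w) ((par (cfork w) ^^ i) v) < lab (cfork w) v"
      by (simp add: cfork_depth) (simp add: cfork_def funpow_minus1')
  next
    fix i assume h: "honest_idx w i"
    then have "{v \<in> verts (cfork w). lab (cfork w) v = i} = {i}" using iL by (auto simp: cfork_def)
    then show "card {v \<in> verts (cfork w). lab (cfork w) v = i} = 1" by simp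
  next
    fix i j u v assume "honest_idx w i \<and> honest_idx w j \<and> i < j \<and> u \<in> verts (cfork w) \<and>
        v \<in> verts (cfork w) \<and> lab (cfork w) u = i \<and> lab (cfork w) v = j"
    then show "depth (cfork w) u < depth (cfork w) v" unfolding cfork_depth by (simp add: cfork_def)
  qed
  have C: "closed_fork w (cfork w)"
    unfolding closed_fork_def
  proof (intro allI impI)
    fix v assume lf: "is_leaf (cfork w) v"
    have "v = ?L"
    proof (rule ccontr)
      assume "v \<noteq> ?L"
      moreover have "v \<le> ?L" using lf by (simp add: is_leaf_def cfork_def)
      ultimately have "Suc v \<in> verts (cfork w) \<and> Suc v \<noteq> rt (cfork w) \<and> par (cfork w) (Suc v) = v"
        by (simp add: cfork_def)
      then show False using lf unfolding is_leaf_def by blast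
    qed
    then show "honest_vertex w (cfork w) v" using LH unfolding honest_vertex_def
      by (auto simp: cfork_def)
  qed
  show ?thesis using F C by simp
qed

lemma mu_le_mub: "mu x y \<le> mub x y"
proof -
  let ?S = "{mu_fork x y F | F. is_fork (x @ y) F \<and> closed_fork (x @ y) F}"
  have "?S \<noteq> {}" using cfork_ok[of "x @ y"] by blast
  moreover have "\<And>a. a \<in> ?S \<Longrightarrow> a \<le> mub x y" using mu_fork_le by blast
  ultimately show ?thesis unfolding mu_def by (rule cSup_least)
qed



lemma rho_nonneg: "0 \<le> rho w"
  by (induction w rule: rev_induct) (auto simp: rstep_def)

lemma mst_snoc: "mst x (y @ [c]) = mstep (mst x y) c"
  by (simp add: mst_def)

lemma mst_inv: "0 \<le> fst (mst x y) \<and> snd (mst x y) \<le> fst (mst x y)"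
proof (induction y rule: rev_induct)
  case Nil then show ?case using rho_nonneg[of x] by (simp add: mst_def)
next
  case (snoc c y) then show ?case by (auto simp: mst_snoc mstep_def rstep_def)
qed

lemma comb:
  fixes X T F P k l n q th :: real
  assumes "0 \<le> X" "T = k * X" "F = l * X" "P = n * X" "q * k + (1 - q) * l \<le> th * n" "l \<le> th * n"
  shows "q * T + (1 - q) * F \<le> th * P \<and> F \<le> th * P"
proof -
  have "(q * k + (1 - q) * l) * X \<le> (th * n) * X" using assms by (intro mult_right_mono) auto
  moreover have "l * X \<le> (th * n) * X" using assms by (intro mult_right_mono) auto
  ultimately show ?thesis using assms by (simp add: algebra_simps)
qed

definition phi :: "real \<Rightarrow> real \<Rightarrow> real \<Rightarrow> int \<times> int \<Rightarrow> real" where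
  "phi a v b s = (if 0 \<le> snd s then a ^ nat (snd s) else v ^ nat (- snd s)) * b ^ nat (fst s - snd s)"

locale params =
  fixes e :: real
  assumes e_pos: "0 < e" and e_le: "e \<le> 1/2"
begin

definition "q = (1 - e) / 2"
definition "a = 1 + e^2/6"
definition "b = 1 + e^2/2"
definition "u = 1 + e"
definition "v = 1 / (1 + e)"
definition "th = 1 - e^3/8"

lemma e2: "e^2 \<le> 1/4"
proof -
  have "e^2 \<le> (1/2)^2" using e_pos e_le by (intro power_mono) auto
  then show ?thesis by (simp add: power2_eq_square)
qed

lemma e3: "e^3 \<le> 1/8"
proof -
  have "e^3 \<le> (1/2)^3" using e_pos e_le by (intro power_mono) auto
  then show ?thesis by (simp add: power3_eq_cube)
qed

lemma e2p: "0 \<le> e^2" and e3p: "0 \<le> e^3" using e_pos by auto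

lemma pos_facts: "0 < q" "q < 1" "1 \<le> a" "1 \<le> b" "0 < u" "0 < v" "0 < th" "th < 1" "a \<le> 1 + th"
  using e_pos e_le e2 e3 e2p e3p by (auto simp: q_def a_def b_def u_def v_def th_def)

lemma uv: "u * v = 1" by (simp add: u_def v_def) (use e_pos in simp)

lemma S1: "q * a^2 + (1 - q) * 1 \<le> th * a" "1 \<le> th * a"
proof -
  have "th * a - (q * a^2 + (1 - q) * 1) = e^3 * (1/24 - e/72 - e^2/144)"
    by (simp add: q_def a_def th_def field_simps power2_eq_square power3_eq_cube)
  moreover have "0 \<le> 1/24 - e/72 - e^2/144" using e_le e2 by simp
  ultimately show "q * a^2 + (1 - q) * 1 \<le> th * a" using e3p by (smt (verit) mult_nonneg_nonneg)
  have "th * a - 1 = e^2 * (1/6 - e/8 - e^3/48)"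
    by (simp add: q_def a_def th_def field_simps power2_eq_square power3_eq_cube)
  moreover have "0 \<le> 1/6 - e/8 - e^3/48" using e_le e3 by simp
  ultimately show "1 \<le> th * a" using e2p by (smt (verit) mult_nonneg_nonneg)
qed

lemma S2: "q * (a * b) + (1 - q) * 1 \<le> th * b" "1 \<le> th * b"
proof -
  have "th * b - (q * (a * b) + (1 - q) * 1) = e^2 * (1/6 + 5*e/24 - e^2/24 - e^3/48)"
    by (simp add: q_def a_def b_def th_def field_simps power2_eq_square power3_eq_cube)
  moreover have "0 \<le> 1/6 + 5*e/24 - e^2/24 - e^3/48" using e_pos e2 e3 by simp
  ultimately show "q * (a * b) + (1 - q) * 1 \<le> th * b" using e2p by (smt (verit) mult_nonneg_nonneg)
  have "th * b - 1 = e^2 * (1/2 - e/8 - e^3/16)"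
    by (simp add: q_def a_def b_def th_def field_simps power2_eq_square power3_eq_cube)
  moreover have "0 \<le> 1/2 - e/8 - e^3/16" using e_le e3 by simp
  ultimately show "1 \<le> th * b" using e2p by (smt (verit) mult_nonneg_nonneg)
qed

lemma P3: "q * a * u + (1 - q) * b \<le> th * u" "b \<le> th * u"
proof -
  have "th * u - (q * a * u + (1 - q) * b) = e * (1/2 + e/6 - 3*e^2/8 - e^3/24)"
    by (simp add: q_def a_def b_def u_def th_def field_simps power2_eq_square power3_eq_cube)
  moreover have "0 \<le> 1/2 + e/6 - 3*e^2/8 - e^3/24" using e_pos e2 e3 by simp
  ultimately show "q * a * u + (1 - q) * b \<le> th * u" using e_pos by (smt (verit) mult_nonneg_nonneg)
  have "th * u - b = e * (1 - e/2 - e^2/8 - e^3/8)"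
    by (simp add: q_def a_def b_def u_def th_def field_simps power2_eq_square power3_eq_cube)
  moreover have "0 \<le> 1 - e/2 - e^2/8 - e^3/8" using e_le e2 e3 by simp
  ultimately show "b \<le> th * u" using e_pos by (smt (verit) mult_nonneg_nonneg)
qed

lemma P4: "q * u^2 + (1 - q) \<le> th * u"
proof -
  have "th * u - (q * u^2 + (1 - q)) = e^2 * (1/2 + 3*e/8 - e^2/8)"
    by (simp add: q_def u_def th_def field_simps power2_eq_square power3_eq_cube)
  moreover have "0 \<le> 1/2 + 3*e/8 - e^2/8" using e_pos e2 by simp
  ultimately show ?thesis using e2p by (smt (verit) mult_nonneg_nonneg)
qed

lemma P5: "q * u^2 + (1 - q) * b \<le> th * u"
proof -
  have "th * u - (q * u^2 + (1 - q) * b) = e^2 * (1/4 + e/8 - e^2/8)"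
    by (simp add: q_def b_def u_def th_def field_simps power2_eq_square power3_eq_cube)
  moreover have "0 \<le> 1/4 + e/8 - e^2/8" using e_pos e2 by simp
  ultimately show ?thesis using e2p by (smt (verit) mult_nonneg_nonneg)
qed

lemma S3: "q * a + (1 - q) * (v * b) \<le> th * 1" "v * b \<le> th * 1"
proof -
  have "q * a + (1 - q) * (v * b) = v * (q * a * u + (1 - q) * b)"
    using uv by (simp add: algebra_simps)
  also have "\<dots> \<le> v * (th * u)" using P3(1) pos_facts by (intro mult_left_mono) auto
  also have "\<dots> = th" using uv by (simp add: algebra_simps)
  finally show "q * a + (1 - q) * (v * b) \<le> th * 1" by simp
  have "v * b \<le> v * (th * u)" using P3(2) pos_facts by (intro mult_left_mono) auto
  also have "\<dots> = th" using uv by (simp add: algebra_simps)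
  finally show "v * b \<le> th * 1" by simp
qed

lemma S4: "q * 1 + (1 - q) * v^2 \<le> th * v" "v^2 \<le> th * v"
proof -
  have "q * 1 + (1 - q) * v^2 = v^2 * (q * u^2 + (1 - q))"
    using uv by (simp add: algebra_simps power2_eq_square)
  also have "\<dots> \<le> v^2 * (th * u)" using P4 by (intro mult_left_mono) auto
  also have "\<dots> = th * v" using uv by (simp add: algebra_simps power2_eq_square)
  finally show "q * 1 + (1 - q) * v^2 \<le> th * v" .
  have "v^2 * 1 \<le> v^2 * (th * u)" using P3(2) pos_facts by (intro mult_left_mono) auto
  also have "\<dots> = th * v" using uv by (simp add: algebra_simps power2_eq_square)
  finally show "v^2 \<le> th * v" by simp
qed

lemma S5: "q * 1 + (1 - q) * (v^2 * b) \<le> th * v" "v^2 * b \<le> th * v"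
proof -
  have "q * 1 + (1 - q) * (v^2 * b) = v^2 * (q * u^2 + (1 - q) * b)"
    using uv by (simp add: algebra_simps power2_eq_square)
  also have "\<dots> \<le> v^2 * (th * u)" using P5 by (intro mult_left_mono) auto
  also have "\<dots> = th * v" using uv by (simp add: algebra_simps power2_eq_square)
  finally show "q * 1 + (1 - q) * (v^2 * b) \<le> th * v" .
  have "v^2 * b \<le> v^2 * (th * u)" using P3(2) pos_facts by (intro mult_left_mono) auto
  also have "\<dots> = th * v" using uv by (simp add: algebra_simps power2_eq_square)
  finally show "v^2 * b \<le> th * v" .
qed

lemma phi_nonneg: "0 \<le> phi a v b s"
  using pos_facts unfolding phi_def by simp

lemma phi_ge1: "0 \<le> snd s \<Longrightarrow> snd s \<le> fst s \<Longrightarrow> 1 \<le> phi a v b s"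
proof -
  assume s: "0 \<le> snd s" "snd s \<le> fst s"
  have "1 \<le> a ^ nat (snd s)" "1 \<le> b ^ nat (fst s - snd s)" using pos_facts by (auto intro: one_le_power)
  then show ?thesis using s mult_mono[of 1 "a ^ nat (snd s)" 1 "b ^ nat (fst s - snd s)"]
    unfolding phi_def by simp
qed

lemma phi_i:
  assumes r: "0 \<le> r" and mr: "m \<le> r" and i: "1 \<le> m"
  shows "q * phi a v b (mstep (r, m) True) + (1 - q) * phi a v b (mstep (r, m) False) \<le> th * phi a v b (r, m)
     \<and> phi a v b (mstep (r, m) False) \<le> th * phi a v b (r, m)"
proof -
  have a0: "0 < a" and b0: "0 < b" and v0: "0 < v" using pos_facts by auto
  define k where "k = nat (m - 1)"
  have k: "m = int k + 1" using i unfolding k_def by simp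
  have nm: "nat m = Suc k" "nat (m + 1) = Suc (Suc k)" "nat (m - 1) = k" using k by auto
  define d where "d = nat (r - m)"
  have T: "phi a v b (mstep (r, m) True) = a^2 * (a ^ k * b ^ d)"
    using i by (simp add: phi_def mstep_def rstep_def d_def[symmetric] nm power2_eq_square)
  have F: "phi a v b (mstep (r, m) False) = 1 * (a ^ k * b ^ d)"
    using i mr by (simp add: phi_def mstep_def rstep_def d_def[symmetric] nm)
  have P: "phi a v b (r, m) = a * (a ^ k * b ^ d)"
    using i by (simp add: phi_def d_def[symmetric] nm)
  show ?thesis by (rule comb[OF _ T F P S1]) (use a0 b0 in simp)
qed

lemma phi_ii:
  assumes ii: "m = 0" "1 \<le> r"
  shows "q * phi a v b (mstep (r, m) True) + (1 - q) * phi a v b (mstep (r, m) False) \<le> th * phi a v b (r, m)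
     \<and> phi a v b (mstep (r, m) False) \<le> th * phi a v b (r, m)"
proof -
  have a0: "0 < a" and b0: "0 < b" and v0: "0 < v" using pos_facts by auto
  define d where "d = nat (r - 1)"
  have d: "r = int d + 1" using ii unfolding d_def by simp
  have nr: "nat r = Suc d" "nat (r + 1) = Suc (Suc d)" "nat (r - 1) = d" using d by auto
  have T: "phi a v b (mstep (r, m) True) = (a * b) * (b ^ d)"
    using ii by (simp add: phi_def mstep_def rstep_def nr)
  have F: "phi a v b (mstep (r, m) False) = 1 * (b ^ d)"
    using ii by (simp add: phi_def mstep_def rstep_def nr)
  have P: "phi a v b (r, m) = b * (b ^ d)"
    using ii by (simp add: phi_def nr)
  show ?thesis by (rule comb[OF _ T F P S2]) (use a0 b0 in simp)
qed

lemma phi_iii: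
  assumes iii: "m = 0" "r = 0"
  shows "q * phi a v b (mstep (r, m) True) + (1 - q) * phi a v b (mstep (r, m) False) \<le> th * phi a v b (r, m)
     \<and> phi a v b (mstep (r, m) False) \<le> th * phi a v b (r, m)"
proof -
  have T: "phi a v b (mstep (r, m) True) = a * 1"
    using iii by (simp add: phi_def mstep_def rstep_def)
  have F: "phi a v b (mstep (r, m) False) = (v * b) * 1"
    using iii by (simp add: phi_def mstep_def rstep_def)
  have P: "phi a v b (r, m) = 1 * 1"
    using iii by (simp add: phi_def)
  show ?thesis by (rule comb[OF _ T F P S3]) simp
qed

lemma phi_iv:
  assumes iv: "m = -1" "1 \<le> r"
  shows "q * phi a v b (mstep (r, m) True) + (1 - q) * phi a v b (mstep (r, m) False) \<le> th * phi a v b (r, m)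
     \<and> phi a v b (mstep (r, m) False) \<le> th * phi a v b (r, m)"
proof -
  have a0: "0 < a" and b0: "0 < b" and v0: "0 < v" using pos_facts by auto
  have e1: "r - 1 + 2 = r + 1" by simp
  have T: "phi a v b (mstep (r, m) True) = 1 * (b ^ nat (r + 1))"
    using iv by (simp add: phi_def mstep_def rstep_def)
  have F: "phi a v b (mstep (r, m) False) = v^2 * (b ^ nat (r + 1))"
    using iv by (simp add: phi_def mstep_def rstep_def e1)
  have P: "phi a v b (r, m) = v * (b ^ nat (r + 1))"
    using iv by (simp add: phi_def)
  show ?thesis by (rule comb[OF _ T F P S4]) (use a0 b0 in simp)
qed

lemma phi_v:
  assumes vv: "m = -1" "r = 0"
  shows "q * phi a v b (mstep (r, m) True) + (1 - q) * phi a v b (mstep (r, m) False) \<le> th * phi a v b (r, m)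
     \<and> phi a v b (mstep (r, m) False) \<le> th * phi a v b (r, m)"
proof -
  have a0: "0 < a" and b0: "0 < b" and v0: "0 < v" using pos_facts by auto
  have T: "phi a v b (mstep (r, m) True) = 1 * b"
    using vv by (simp add: phi_def mstep_def rstep_def)
  have F: "phi a v b (mstep (r, m) False) = (v^2 * b) * b"
    using vv by (simp add: phi_def mstep_def rstep_def power2_eq_square)
  have P: "phi a v b (r, m) = v * b"
    using vv by (simp add: phi_def)
  show ?thesis by (rule comb[OF _ T F P S5]) (use a0 b0 in simp)
qed

lemma phi_vi:
  assumes vi: "m \<le> -2" "1 \<le> r"
  shows "q * phi a v b (mstep (r, m) True) + (1 - q) * phi a v b (mstep (r, m) False) \<le> th * phi a v b (r, m)
     \<and> phi a v b (mstep (r, m) False) \<le> th * phi a v b (r, m)"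
proof -
  have a0: "0 < a" and b0: "0 < b" and v0: "0 < v" using pos_facts by auto
  define k where "k = nat (- m - 2)"
  have nm: "nat (- m) = Suc (Suc k)" "nat (- (m + 1)) = Suc k" "nat (1 - m) = Suc (Suc (Suc k))"
    "nat (- 1 - m) = Suc k" "nat (- m - 1) = Suc k"
    using vi unfolding k_def by auto
  define d where "d = nat (r - m)"
  have T: "phi a v b (mstep (r, m) True) = 1 * (v ^ (k + 1) * b ^ d)"
    using vi by (simp add: phi_def mstep_def rstep_def d_def[symmetric] nm)
  have F: "phi a v b (mstep (r, m) False) = v^2 * (v ^ (k + 1) * b ^ d)"
    using vi by (simp add: phi_def mstep_def rstep_def d_def[symmetric] nm power2_eq_square)
  have P: "phi a v b (r, m) = v * (v ^ (k + 1) * b ^ d)"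
    using vi by (simp add: phi_def d_def[symmetric] nm)
  show ?thesis by (rule comb[OF _ T F P S4]) (use v0 b0 in simp)
qed

lemma phi_vii:
  assumes vii: "m \<le> -2" "r = 0"
  shows "q * phi a v b (mstep (r, m) True) + (1 - q) * phi a v b (mstep (r, m) False) \<le> th * phi a v b (r, m)
     \<and> phi a v b (mstep (r, m) False) \<le> th * phi a v b (r, m)"
proof -
  have a0: "0 < a" and b0: "0 < b" and v0: "0 < v" using pos_facts by auto
  define k where "k = nat (- m - 2)"
  have nm: "nat (- m) = Suc (Suc k)" "nat (- (m + 1)) = Suc k" "nat (1 - m) = Suc (Suc (Suc k))"
    "nat (- 1 - m) = Suc k" "nat (- m - 1) = Suc k"
    using vii unfolding k_def by auto
  have T: "phi a v b (mstep (r, m) True) = 1 * (v ^ (k + 1) * b ^ (k + 2))"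
    using vii by (simp add: phi_def mstep_def rstep_def nm)
  have F: "phi a v b (mstep (r, m) False) = (v^2 * b) * (v ^ (k + 1) * b ^ (k + 2))"
    using vii by (simp add: phi_def mstep_def rstep_def nm power2_eq_square)
  have P: "phi a v b (r, m) = v * (v ^ (k + 1) * b ^ (k + 2))"
    using vii by (simp add: phi_def nm)
  show ?thesis by (rule comb[OF _ T F P S5]) (use v0 b0 in simp)
qed

lemma phi_local:
  assumes r: "0 \<le> r" and mr: "m \<le> r"
  shows "q * phi a v b (mstep (r, m) True) + (1 - q) * phi a v b (mstep (r, m) False) \<le> th * phi a v b (r, m)
     \<and> phi a v b (mstep (r, m) False) \<le> th * phi a v b (r, m)"
proof -
  consider (i) "1 \<le> m" | (ii) "m = 0" "1 \<le> r" | (iii) "m = 0" "r = 0" | (iv) "m = -1" "1 \<le> r"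
    | (v) "m = -1" "r = 0" | (vi) "m \<le> -2" "1 \<le> r" | (vii) "m \<le> -2" "r = 0"
    using r mr by linarith
  then show ?thesis
  proof cases
    case i then show ?thesis by (rule phi_i[OF r mr])
  next
    case ii then show ?thesis by (rule phi_ii)
  next
    case iii then show ?thesis by (rule phi_iii)
  next
    case iv then show ?thesis by (rule phi_iv)
  next
    case v then show ?thesis by (rule phi_v)
  next
    case vi then show ?thesis by (rule phi_vi)
  next
    case vii then show ?thesis by (rule phi_vii)
  qed
qed

lemma rho_local:
  assumes r: "0 \<le> r"
  shows "q * a ^ nat (rstep r True) + (1 - q) * a ^ nat (rstep r False) \<le> th * a ^ nat r + 1
     \<and> a ^ nat (rstep r False) \<le> th * a ^ nat r + 1"
proof (cases "r = 0")
  case True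
  have "(1 - q) * 1 \<le> (1 - q) * a" using pos_facts by (intro mult_left_mono) auto
  then have "q * a + (1 - q) * 1 \<le> a" by (simp add: algebra_simps)
  then show ?thesis using True pos_facts by (simp add: rstep_def)
next
  case False
  define d where "d = nat (r - 1)"
  have d: "r = int d + 1" using r False unfolding d_def by simp
  have a0: "0 < a" using pos_facts by simp
  have nr: "nat r = Suc d" "nat (r + 1) = Suc (Suc d)" "nat (r - 1) = d" using d by auto
  have T: "a ^ nat (rstep r True) = a^2 * a ^ d" by (simp add: rstep_def nr power2_eq_square)
  have mx: "max 0 (r - 1) = r - 1" using r False by simp
  have F: "a ^ nat (rstep r False) = 1 * a ^ d" by (simp add: rstep_def nr mx)
  have P: "a ^ nat r = a * a ^ d" by (simp add: nr)
  have "q * a ^ nat (rstep r True) + (1 - q) * a ^ nat (rstep r False) \<le> th * a ^ nat r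
     \<and> a ^ nat (rstep r False) \<le> th * a ^ nat r"
    by (rule comb[OF _ T F P S1]) (use a0 in simp)
  then show ?thesis by linarith
qed

end


lemma finite_len: "finite {w :: bool list. length w = n}"
  using finite_lists_length_eq[of "UNIV :: bool set" n] by simp

lemma arith1:
  fixes QT QF q GT GF H :: real
  assumes "0 \<le> QT" "0 \<le> QF" "QT \<le> q * (QT + QF)" "q * GT + (1 - q) * GF \<le> H" "GF \<le> H"
  shows "GT * QT + GF * QF \<le> H * (QT + QF)"
proof (cases "GF \<le> GT")
  case True
  have "(GT - GF) * QT \<le> (GT - GF) * (q * (QT + QF))" using assms True by (intro mult_left_mono) auto
  then have "GT * QT + GF * QF \<le> (QT + QF) * (q * GT + (1 - q) * GF)" by (simp add: algebra_simps)
  also have "\<dots> \<le> (QT + QF) * H" using assms by (intro mult_left_mono) auto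
  finally show ?thesis by (simp add: algebra_simps)
next
  case False
  have "GT * QT \<le> GF * QT" using assms False by (intro mult_right_mono) auto
  moreover have "GF * (QT + QF) \<le> H * (QT + QF)" using assms by (intro mult_right_mono) auto
  ultimately show ?thesis by (simp add: algebra_simps)
qed

locale mainl = params e for e +
  fixes W :: "bool list pmf" and T :: nat
  assumes supp: "set_pmf W \<subseteq> {w. length w = T}"
  and mart: "\<And>t p. t < T \<Longrightarrow> measure_pmf.prob W {w. take t w = p \<and> w ! t} \<le> (1 - e) / 2 * measure_pmf.prob W {w. take t w = p}"
begin

abbreviation "ST \<equiv> {w :: bool list. length w = T}"

definition EW :: "(bool list \<Rightarrow> real) \<Rightarrow> real" where
  "EW f = (\<Sum>w\<in>ST. pmf W w * f w)"

lemma prob_sum: "measure_pmf.prob W A = sum (pmf W) (ST \<inter> A)"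
proof -
  have "measure_pmf.prob W A = measure_pmf.prob W (A \<inter> set_pmf W)" by (simp add: measure_Int_set_pmf)
  also have "A \<inter> set_pmf W = (ST \<inter> A) \<inter> set_pmf W" using supp by auto
  also have "measure_pmf.prob W \<dots> = measure_pmf.prob W (ST \<inter> A)" by (simp add: measure_Int_set_pmf)
  also have "\<dots> = sum (pmf W) (ST \<inter> A)" using finite_len by (intro measure_measure_pmf_finite) auto
  finally show ?thesis .
qed

lemma Ex_one: "EW (\<lambda>_. 1) = 1"
  using prob_sum[of UNIV] unfolding EW_def by simp

lemma Ex_lin: "EW (\<lambda>w. c * f w + d) = c * EW f + d"
proof -
  have "EW (\<lambda>w. c * f w + d) = c * EW f + d * EW (\<lambda>_. 1)"
    unfolding EW_def by (simp add: algebra_simps sum.distrib sum_distrib_left)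
  then show ?thesis using Ex_one by simp
qed

lemma step:
  assumes j: "j < T"
    and hyp: "\<And>p. length p = j \<Longrightarrow> q * G (p @ [True]) + (1 - q) * G (p @ [False]) \<le> H p \<and> G (p @ [False]) \<le> H p"
  shows "EW (\<lambda>w. G (take (Suc j) w)) \<le> EW (\<lambda>w. H (take j w))"
proof -
  let ?PJ = "{p :: bool list. length p = j}"
  let ?A = "\<lambda>p. {w \<in> ST. take j w = p}"
  have img: "(\<lambda>w. take j w) ` ST \<subseteq> ?PJ" using j by auto
  have L: "EW (\<lambda>w. G (take (Suc j) w)) = (\<Sum>p\<in>?PJ. \<Sum>w\<in>?A p. pmf W w * G (take (Suc j) w))"
    unfolding EW_def by (rule sum.group[OF finite_len finite_len img, symmetric])
  have R: "EW (\<lambda>w. H (take j w)) = (\<Sum>p\<in>?PJ. \<Sum>w\<in>?A p. pmf W w * H (take j w))"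
    unfolding EW_def by (rule sum.group[OF finite_len finite_len img, symmetric])
  have inner: "(\<Sum>w\<in>?A p. pmf W w * G (take (Suc j) w)) \<le> (\<Sum>w\<in>?A p. pmf W w * H (take j w))"
    if p: "p \<in> ?PJ" for p
  proof -
    have finA: "finite (?A p)" using finite_len by simp
    define QT where "QT = sum (pmf W) (?A p \<inter> {w. w ! j})"
    define QF where "QF = sum (pmf W) (?A p \<inter> - {w. w ! j})"
    have "(\<Sum>w\<in>?A p. pmf W w * G (take (Suc j) w)) =
          (\<Sum>w\<in>?A p. if w ! j then pmf W w * G (p @ [True]) else pmf W w * G (p @ [False]))"
    proof (rule sum.cong[OF refl])
      fix w assume w: "w \<in> ?A p"
      then have "take (Suc j) w = p @ [w ! j]" using j by (auto simp: take_Suc_conv_app_nth)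
      then show "pmf W w * G (take (Suc j) w) = (if w ! j then pmf W w * G (p @ [True]) else pmf W w * G (p @ [False]))"
        by simp
    qed
    also have "\<dots> = (\<Sum>w\<in>?A p \<inter> {w. w ! j}. pmf W w * G (p @ [True])) + (\<Sum>w\<in>?A p \<inter> - {w. w ! j}. pmf W w * G (p @ [False]))"
      by (rule sum.If_cases[OF finA])
    also have "\<dots> = QT * G (p @ [True]) + QF * G (p @ [False])"
      unfolding QT_def QF_def by (simp add: sum_distrib_right)
    also have "\<dots> = G (p @ [True]) * QT + G (p @ [False]) * QF" by simp
    finally have l: "(\<Sum>w\<in>?A p. pmf W w * G (take (Suc j) w)) = G (p @ [True]) * QT + G (p @ [False]) * QF" .
    have "(\<Sum>w\<in>?A p. pmf W w * H (take j w)) = (\<Sum>w\<in>?A p. if w ! j then pmf W w * H p else pmf W w * H p)"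
      by (rule sum.cong) auto
    also have "\<dots> = (\<Sum>w\<in>?A p \<inter> {w. w ! j}. pmf W w * H p) + (\<Sum>w\<in>?A p \<inter> - {w. w ! j}. pmf W w * H p)"
      by (rule sum.If_cases[OF finA])
    also have "\<dots> = QT * H p + QF * H p"
      unfolding QT_def QF_def by (simp add: sum_distrib_right)
    also have "\<dots> = H p * (QT + QF)" by (simp add: algebra_simps)
    finally have r: "(\<Sum>w\<in>?A p. pmf W w * H (take j w)) = H p * (QT + QF)" .
    have "(\<Sum>w\<in>?A p. pmf W w) = (\<Sum>w\<in>?A p. if w ! j then pmf W w else pmf W w)" by simp
    also have "\<dots> = QT + QF" unfolding QT_def QF_def by (simp only: sum.If_cases[OF finA])
    finally have qs: "(\<Sum>w\<in>?A p. pmf W w) = QT + QF" .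
    have "QT = measure_pmf.prob W {w. take j w = p \<and> w ! j}"
      unfolding prob_sum QT_def by (rule sum.cong) auto
    moreover have "QT + QF = measure_pmf.prob W {w. take j w = p}"
      unfolding prob_sum qs[symmetric] by (rule sum.cong) auto
    ultimately have "QT \<le> q * (QT + QF)" using mart[OF j, of p] by (simp add: q_def)
    moreover have "0 \<le> QT" "0 \<le> QF" unfolding QT_def QF_def by (auto intro: sum_nonneg)
    ultimately show ?thesis unfolding l r using hyp[of p] p by (intro arith1) auto
  qed
  show ?thesis unfolding L R by (rule sum_mono) (rule inner)
qed

lemma rho_moment: "j \<le> T \<Longrightarrow> EW (\<lambda>w. a ^ nat (rho (take j w))) \<le> 1 / (1 - th)"
proof (induction j)
  case 0
  have "EW (\<lambda>w. a ^ nat (rho (take 0 w))) = 1" using Ex_one by simp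
  then show ?case using pos_facts by simp
next
  case (Suc j)
  have "EW (\<lambda>w. a ^ nat (rho (take (Suc j) w))) \<le> EW (\<lambda>w. th * a ^ nat (rho (take j w)) + 1)"
    by (rule step[where G = "\<lambda>p. a ^ nat (rho p)" and H = "\<lambda>p. th * a ^ nat (rho p) + 1"])
       (use Suc.prems rho_local rho_nonneg in auto)
  also have "\<dots> = th * EW (\<lambda>w. a ^ nat (rho (take j w))) + 1" by (rule Ex_lin)
  also have "\<dots> \<le> th * (1 / (1 - th)) + 1"
    using Suc pos_facts by (intro add_right_mono mult_left_mono) auto
  also have "\<dots> = 1 / (1 - th)" using pos_facts by (simp add: field_simps)
  finally show ?case .
qed

definition Gm :: "nat \<Rightarrow> bool list \<Rightarrow> real" where
  "Gm m0 p = phi a v b (mst (take m0 p) (drop m0 p))"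

lemma phi_chain: "m0 + L \<le> T \<Longrightarrow> EW (\<lambda>w. Gm m0 (take (m0 + L) w)) \<le> th ^ L / (1 - th)"
proof (induction L)
  case 0
  have "Gm m0 (take m0 w) = a ^ nat (rho (take m0 w))" for w
    unfolding Gm_def phi_def by (simp add: mst_def rho_nonneg)
  then show ?case using rho_moment[of m0] 0 by simp
next
  case (Suc L)
  have "EW (\<lambda>w. Gm m0 (take (Suc (m0 + L)) w)) \<le> EW (\<lambda>w. th * Gm m0 (take (m0 + L) w) + 0)"
  proof (rule step)
    show "m0 + L < T" using Suc.prems by simp
  next
    fix p :: "bool list" assume lp: "length p = m0 + L"
    have tk: "take m0 (p @ [c]) = take m0 p" "drop m0 (p @ [c]) = drop m0 p @ [c]" for c using lp by auto
    have G: "Gm m0 (p @ [c]) = phi a v b (mstep (mst (take m0 p) (drop m0 p)) c)" for c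
      unfolding Gm_def tk mst_snoc ..
    obtain r m where rm: "mst (take m0 p) (drop m0 p) = (r, m)" by fastforce
    have "0 \<le> r" "m \<le> r" using mst_inv[of "take m0 p" "drop m0 p"] rm by auto
    then show "q * Gm m0 (p @ [True]) + (1 - q) * Gm m0 (p @ [False]) \<le> th * Gm m0 p + 0 \<and>
          Gm m0 (p @ [False]) \<le> th * Gm m0 p + 0"
      using phi_local[of r m] unfolding G rm by (simp add: Gm_def rm)
  qed
  also have "\<dots> = th * EW (\<lambda>w. Gm m0 (take (m0 + L) w)) + 0" by (rule Ex_lin)
  also have "\<dots> \<le> th * (th ^ L / (1 - th))"
  proof -
    have IH: "EW (\<lambda>w. Gm m0 (take (m0 + L) w)) \<le> th ^ L / (1 - th)" using Suc.IH Suc.prems by simp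
    have "th * EW (\<lambda>w. Gm m0 (take (m0 + L) w)) \<le> th * (th ^ L / (1 - th))"
      by (rule mult_left_mono[OF IH]) (use pos_facts in simp)
    then show ?thesis by simp
  qed
  finally show ?case by simp
qed

lemma bad_L: "measure_pmf.prob W {w. m0 + L \<le> length w \<and> 0 \<le> mub (take m0 w) (take L (drop m0 w))}
   \<le> th ^ L / (1 - th)"
proof (cases "m0 + L \<le> T")
  case False
  have "ST \<inter> {w. m0 + L \<le> length w \<and> 0 \<le> mub (take m0 w) (take L (drop m0 w))} = {}" using False by auto
  then show ?thesis unfolding prob_sum using pos_facts by simp
next
  case True
  let ?B = "{w. m0 + L \<le> length w \<and> 0 \<le> mub (take m0 w) (take L (drop m0 w))}"
  have "measure_pmf.prob W ?B = (\<Sum>w\<in>ST. if w \<in> ?B then pmf W w else 0)"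
    unfolding prob_sum using finite_len by (simp add: sum.inter_restrict)
  also have "\<dots> \<le> EW (\<lambda>w. Gm m0 (take (m0 + L) w))"
    unfolding EW_def
  proof (rule sum_mono)
    fix w assume w: "w \<in> ST"
    show "(if w \<in> ?B then pmf W w else 0) \<le> pmf W w * Gm m0 (take (m0 + L) w)"
    proof (cases "w \<in> ?B")
      case True
      have e: "drop m0 (take (m0 + L) w) = take L (drop m0 w)" "take m0 (take (m0 + L) w) = take m0 w"
        by (auto simp: drop_take min_def)
      have s0: "0 \<le> snd (mst (take m0 w) (take L (drop m0 w)))" using True by (simp add: mub_def)
      have "Gm m0 (take (m0 + L) w) = phi a v b (mst (take m0 w) (take L (drop m0 w)))"
        unfolding Gm_def e ..
      moreover have "1 \<le> phi a v b (mst (take m0 w) (take L (drop m0 w)))"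
        using phi_ge1[OF s0] mst_inv by blast
      ultimately have "1 \<le> Gm m0 (take (m0 + L) w)" by simp
      then show ?thesis using True by (simp add: mult_le_cancel_left1)
    next
      case False
      have "0 \<le> pmf W w * Gm m0 (take (m0 + L) w)" using phi_nonneg by (simp add: Gm_def)
      moreover have "(if w \<in> ?B then pmf W w else 0) = 0" using False by (rule if_not_P)
      ultimately show ?thesis by linarith
    qed
  qed
  also have "\<dots> \<le> th ^ L / (1 - th)" using phi_chain True by simp
  finally show ?thesis .
qed


lemma main_bound:
  "measure_pmf.prob W {w. \<exists>x y z. w = x @ y @ z \<and> length x + 1 = s \<and> length y \<ge> k \<and> mu x y \<ge> 0}
   \<le> th ^ k / (1 - th)^2"
proof -
  let ?E = "{w. \<exists>x y z. w = x @ y @ z \<and> length x + 1 = s \<and> length y \<ge> k \<and> mu x y \<ge> 0}"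
  define m0 where "m0 = s - 1"
  define B where "B L = {w. m0 + L \<le> length w \<and> 0 \<le> mub (take m0 w) (take L (drop m0 w))}" for L
  have sub: "?E \<inter> set_pmf W \<subseteq> (\<Union>L\<in>{k..T}. B L)"
  proof
    fix w assume "w \<in> ?E \<inter> set_pmf W"
    then obtain x y z where w: "w = x @ y @ z" "length x + 1 = s" "k \<le> length y" "0 \<le> mu x y"
      and lw: "length w = T" using supp by blast
    have lx: "length x = m0" using w(2) unfolding m0_def by simp
    have "take m0 w = x" "take (length y) (drop m0 w) = y" using w(1) lx by auto
    moreover have "0 \<le> mub x y" using w(4) mu_le_mub[of x y] by simp
    moreover have "m0 + length y \<le> length w" using w(1) lx by simp
    ultimately have "w \<in> B (length y)" unfolding B_def by simp
    moreover have "length y \<in> {k..T}" using w(1,3) lw by simp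
    ultimately show "w \<in> (\<Union>L\<in>{k..T}. B L)" by blast
  qed
  have "measure_pmf.prob W ?E = measure_pmf.prob W (?E \<inter> set_pmf W)" by (simp add: measure_Int_set_pmf)
  also have "\<dots> \<le> measure_pmf.prob W (\<Union>L\<in>{k..T}. B L)"
    using sub by (intro measure_pmf.finite_measure_mono) auto
  also have "\<dots> \<le> (\<Sum>L\<in>{k..T}. measure_pmf.prob W (B L))"
    by (intro measure_pmf.finite_measure_subadditive_finite) auto
  also have "\<dots> \<le> (\<Sum>L\<in>{k..T}. th ^ L / (1 - th))"
    by (intro sum_mono) (unfold B_def, rule bad_L)
  also have "\<dots> = (\<Sum>L=k..T. th ^ L) / (1 - th)" by (simp add: sum_divide_distrib)
  also have "\<dots> \<le> (th ^ k / (1 - th)) / (1 - th)"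
  proof -
    have "(\<Sum>L=k..T. th ^ L) \<le> th ^ k / (1 - th)"
    proof (cases "T < k")
      case True then show ?thesis using pos_facts by simp
    next
      case False
      then have "(\<Sum>L=k..T. th ^ L) = (th ^ k - th ^ Suc T) / (1 - th)" using pos_facts by (simp add: sum_gp)
      also have "\<dots> \<le> th ^ k / (1 - th)" using pos_facts by (intro divide_right_mono) auto
      finally show ?thesis .
    qed
    then show ?thesis using pos_facts by (intro divide_right_mono) auto
  qed
  also have "\<dots> = th ^ k / (1 - th)^2" by (simp add: power2_eq_square)
  finally show ?thesis .
qed

end

theorem corollary1:
  fixes eps :: real
  assumes "0 < eps" and "eps < 1"
  shows "\<exists>C c. C > 0 \<and> c > 0 \<and>
    (\<forall>(T::nat) (s::nat) (k::nat) (W::bool list pmf). eps_martingale eps T W \<longrightarrow>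
       measure_pmf.prob W {w. \<exists>x y z. w = x @ y @ z \<and> length x + 1 = s \<and> length y \<ge> k \<and>
                                    mu x y \<ge> 0}
       \<le> C * exp (- c * real k))"
proof -
  define e where "e = min eps (1/2)"
  have P: "params e" unfolding params_def e_def using assms by auto
  define th where "th = params.th e"
  have th01: "0 < th" "th < 1" using params.pos_facts[OF P] unfolding th_def by auto
  define C where "C = 1 / (1 - th)^2"
  define c where "c = - ln th"
  have C0: "C > 0" unfolding C_def using th01 by simp
  have c0: "c > 0" unfolding c_def using th01 by simp
  have "\<forall>(T::nat) (s::nat) (k::nat) (W::bool list pmf). eps_martingale eps T W \<longrightarrow>
       measure_pmf.prob W {w. \<exists>x y z. w = x @ y @ z \<and> length x + 1 = s \<and> length y \<ge> k \<and>
                                    mu x y \<ge> 0}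
       \<le> C * exp (- c * real k)"
  proof (intro allI impI)
    fix T s k :: nat and W :: "bool list pmf"
    assume M: "eps_martingale eps T W"
    have Hm: "mainl e W T"
    proof (rule mainl.intro[OF P], unfold_locales)
      show "set_pmf W \<subseteq> {w. length w = T}" using M unfolding eps_martingale_def by blast
    next
      fix t p assume t: "t < T"
      have "measure_pmf.prob W {w. take t w = p \<and> w ! t} \<le> (1 - eps) / 2 * measure_pmf.prob W {w. take t w = p}"
        using M t unfolding eps_martingale_def by blast
      also have "\<dots> \<le> (1 - e) / 2 * measure_pmf.prob W {w. take t w = p}"
        unfolding e_def by (intro mult_right_mono) auto
      finally show "measure_pmf.prob W {w. take t w = p \<and> w ! t} \<le> (1 - e) / 2 * measure_pmf.prob W {w. take t w = p}" .
    qed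
    have "measure_pmf.prob W {w. \<exists>x y z. w = x @ y @ z \<and> length x + 1 = s \<and> length y \<ge> k \<and> mu x y \<ge> 0}
       \<le> th ^ k / (1 - th)^2" unfolding th_def by (rule mainl.main_bound[OF Hm])
    also have "th ^ k = exp (- c * real k)"
    proof -
      have "exp (- c * real k) = exp (real k * ln th)" unfolding c_def by (simp add: algebra_simps)
      also have "\<dots> = exp (ln th) ^ k" by (rule exp_of_nat_mult)
      also have "\<dots> = th ^ k" using th01 by simp
      finally show ?thesis by simp
    qed
    finally show "measure_pmf.prob W {w. \<exists>x y z. w = x @ y @ z \<and> length x + 1 = s \<and> length y \<ge> k \<and> mu x y \<ge> 0}
       \<le> C * exp (- c * real k)" unfolding C_def by simp
  qed
  then show ?thesis using C0 c0 by blast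
qed


end
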